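(* Consider the networked closed-loop system described in the context (plant with bounded additive disturbance, local nominal model with consistent actuator and ancillary controller, remote estimator and tube-based tracking MPC), and suppose the initial plant and nominal states satisfy $x(0)-x_{n}(0)\in\mathbb{Z}_K$. If at time step $k$ the consistency indicator satisfies $\Theta_k=1$, then $x(k)\in\{\hat{x}(k|k-1)\}\oplus\mathbb{Z}_K$.
   Context: Plant: $x(k+1)=Ax(k)+Bu(k)+w(k)$ with $x(k)\in\mathbb{R}^{n_x}$, $u(k)\in\mathbb{R}^{n_u}$, $(A,B)$ stabilizable, and $w(k)\in\mathbb{W}=\{w: H_w w\le h_w\}$ for all $k$, where $\mathbb{W}$ is compact and contains the origin in its interior. State and input constraint sets $\mathbb{X}=\{x:H_x x\le h_x\}$, $\mathbb{U}=\{u:H_u u\le h_u\}$ are bounded and contain the origin in their interior. The Minkowski sum is $\oplus$, the Pontryagin difference is $\ominus$, and $M\mathbb{P}=\{Mp:p\in\mathbb{P}\}$. Network: binary variables $\theta_k$ ($=1$ iff the packet $U_k$ sent by the remote controller at time $k$ is received by the plant) and $\gamma_k$ ($=1$ iff the packet $X_k$ sent by the plant at time $k$ is received by the controller). Sets: $K$ is a gain with spectral radius $\rho(A-BK)<1$, and $\mathbb{Z}_K=\bigoplus_{i=0}^\infty (A-BK)^i\mathbb{W}$. Tightened sets: $\mathbb{X}_c=\mathbb{X}\ominus\mathbb{Z}_K$, $\mathbb{U}_c=\mathbb{U}\ominus(-K)\mathbb{Z}_K$. $\bar K$ is a gain with $\rho(A-B\bar K)<1$. With $x_a=(x_n,\bar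 x,\bar u)$ and $A_a=\begin{bmatrix}A-B\bar K & B\bar K & B\\ 0& I&0\\0&0&I\end{bmatrix}$, let $X_{f,\bar K}=\{x_a: A_a^k x_a\in\mathbb{X}_{a,\bar K}\ \forall k\ge0\}$, where $\mathbb{X}_{a,\bar K}=\{x_a: x_n\in\mathbb{X}_c,\ \bar u-\bar K(x_n-\bar x)\in\mathbb{U}_c\}$, and for fixed $\lambda\in(0,1)$, $X^\lambda_{f,\bar K}=X_{f,\bar K}\cap\{(x_n,\bar x,\bar u):\bar x\in\lambda\mathbb{X}_c,\ \bar u\in\lambda\mathbb{U}_c\}$. Remote MPC at time $k$ (horizon $N$, symmetric $Q\ge0$, $R>0$, $T>0$, $P$ solving $P=(A-B\bar K)^\top P(A-B\bar K)+Q+\bar K^\top R\bar K$, reference $x_r$): minimize over $\mathbf{u}(0),\dots,\mathbf{u}(N-1),\bar x,\bar u$ the cost $\sum_{i=0}^{N-1}(\|\mathbf{x}(i)-\bar x\|_Q^2+\|\mathbf{u}(i)-\bar u\|_R^2)+\|\mathbf{x}(N)-\bar x\|_P^2+\|\bar x-x_r\|_T^2$ subject to $\mathbf{x}(i+1)=A\mathbf{x}(i)+B\mathbf{u}(i)$, $\mathbf{x}(i)\in\mathbb{X}_c$, $\mathbf{u}(i)\in\mathbb{U}_c$ for $i=0,\dots,N-1$, $\mathbf{x}(0)=\hat x(k|k-1)$, $(\mathbf{x}(N),\bar x,\bar u)\in X^\lambda_{f,\bar K}$, and $(A-I)\bar x+B\bar u=0$. With optimal solution $\mathbf{u}^*_k,\bar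 x^*_k,\bar u^*_k$, the controller sends $U_k=\{\mathbf{u}^*_k,\ \bar u^*_k+\bar K\bar x^*_k,\ q_k\}$. Local side: $\Theta_k=\prod_{i=q_k+1}^k\theta_i$ if $\theta_k=1$ and $\Theta_k=0$ otherwise (with $q_k$ taken from the packet $U_k$); $s_k=\Theta_k k+(1-\Theta_k)s_{k-1}$. Nominal input (consistent actuator): $u_n(k)=\mathbf{u}^*_{s_k}(k-s_k)$ if $k-s_k<N$, else $u_n(k)=\bar u^*_{s_k}+\bar K\bar x^*_{s_k}-\bar K x_n(k)$. Nominal model $x_n(k+1)=Ax_n(k)+Bu_n(k)$. Applied input (ancillary controller) $u(k)=u_n(k)-K(x(k)-x_n(k))$. The plant sends $X_k=\{x_n(k),s_k\}$. Remote estimator: $\hat x(k+1|k)=A\hat x(k|k)+B\hat u(k|k)$ with $\hat x(k|k)=\gamma_k x_n(k)+(1-\gamma_k)\hat x(k|k-1)$, $\hat u(k|k)=\gamma_k u_n(k)+(1-\gamma_k)\mathbf{u}^*_k(0)$ (where $u_n(k)$ is recomputed remotely by the consistent actuator rule from the received $s_k$), and $q_{k+1}=\gamma_k k+(1-\gamma_k)q_k$. *)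

theory Defs
  imports "HOL-Analysis.Analysis"
begin

definition matpow :: "real^'n^'n \<Rightarrow> nat \<Rightarrow> real^'n^'n" where
  "matpow M i = ((\<lambda>X. M ** X) ^^ i) (mat 1)"

definition cmat :: "real^'n^'n \<Rightarrow> complex^'n^'n" where
  "cmat M = (\<chi> i j. complex_of_real (M $ i $ j))"

definition spectral_radius :: "real^'n^'n \<Rightarrow> real" where
  "spectral_radius M =
     Sup {cmod l | l. \<exists>v::complex^'n. v \<noteq> 0 \<and> cmat M *v v = l *s v}"

definition stabilizable :: "real^'n^'n \<Rightarrow> real^'m^'n \<Rightarrow> bool" where
  "stabilizable A B \<longleftrightarrow> (\<exists>F::real^'n^'m. spectral_radius (A - B ** F) < 1)"

definition minkowski_sum :: "('a::ab_group_add) set \<Rightarrow> 'a set \<Rightarrow> 'a set" (infixl "\<oplus>\<^sub>M" 65) where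
  "S \<oplus>\<^sub>M T = {s + t | s t. s \<in> S \<and> t \<in> T}"

definition pontryagin_diff :: "('a::ab_group_add) set \<Rightarrow> 'a set \<Rightarrow> 'a set" (infixl "\<ominus>\<^sub>P" 65) where
  "S \<ominus>\<^sub>P T = {x. \<forall>t\<in>T. x + t \<in> S}"

text \<open>Infinite Minkowski sum  Z_K = (+)_{i>=0} (A-BK)^i W, as the set of sums of
  convergent series  sum_i (A-BK)^i w_i  with all w_i in W.\<close>
definition Zset :: "real^'n^'n \<Rightarrow> (real^'n) set \<Rightarrow> (real^'n) set" where
  "Zset M W = {z. \<exists>w. (\<forall>i. w i \<in> W) \<and> (\<lambda>i. matpow M i *v w i) sums z}"

definition psd :: "real^'n^'n \<Rightarrow> bool" where
  "psd M \<longleftrightarrow> transpose M = M \<and> (\<forall>x. 0 \<le> x \<bullet> (M *v x))"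

definition pd :: "real^'n^'n \<Rightarrow> bool" where
  "pd M \<longleftrightarrow> transpose M = M \<and> (\<forall>x. x \<noteq> 0 \<longrightarrow> 0 < x \<bullet> (M *v x))"

definition wnorm2 :: "real^'n^'n \<Rightarrow> real^'n \<Rightarrow> real" where
  "wnorm2 M x = x \<bullet> (M *v x)"

text \<open>The augmented dynamics x_a(k+1) = A_a x_a(k) with
  A_a = [[A - B Kb, B Kb, B],[0,I,0],[0,0,I]], written blockwise.\<close>
definition Aa_step :: "real^'nx^'nx \<Rightarrow> real^'nu^'nx \<Rightarrow> real^'nx^'nu
     \<Rightarrow> ((real^'nx) \<times> (real^'nx) \<times> (real^'nu)) \<Rightarrow> ((real^'nx) \<times> (real^'nx) \<times> (real^'nu))" where
  "Aa_step A B Kb xa = (case xa of (xn, xb, ub) \<Rightarrow>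
      ((A - B ** Kb) *v xn + (B ** Kb) *v xb + B *v ub, xb, ub))"

definition Xa_set :: "real^'nx^'nu \<Rightarrow> (real^'nx) set \<Rightarrow> (real^'nu) set
     \<Rightarrow> ((real^'nx) \<times> (real^'nx) \<times> (real^'nu)) set" where
  "Xa_set Kb Xc Uc = {(xn, xb, ub). xn \<in> Xc \<and> ub - Kb *v (xn - xb) \<in> Uc}"

definition Xf_set :: "real^'nx^'nx \<Rightarrow> real^'nu^'nx \<Rightarrow> real^'nx^'nu \<Rightarrow> (real^'nx) set
     \<Rightarrow> (real^'nu) set \<Rightarrow> ((real^'nx) \<times> (real^'nx) \<times> (real^'nu)) set" where
  "Xf_set A B Kb Xc Uc = {xa. \<forall>k. (Aa_step A B Kb ^^ k) xa \<in> Xa_set Kb Xc Uc}"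

definition Xf_lambda :: "real \<Rightarrow> real^'nx^'nx \<Rightarrow> real^'nu^'nx \<Rightarrow> real^'nx^'nu
     \<Rightarrow> (real^'nx) set \<Rightarrow> (real^'nu) set \<Rightarrow> ((real^'nx) \<times> (real^'nx) \<times> (real^'nu)) set" where
  "Xf_lambda lam A B Kb Xc Uc = Xf_set A B Kb Xc Uc \<inter>
     {(xn, xb, ub). xb \<in> (\<lambda>x. lam *\<^sub>R x) ` Xc \<and> ub \<in> (\<lambda>u. lam *\<^sub>R u) ` Uc}"

fun pred :: "real^'nx^'nx \<Rightarrow> real^'nu^'nx \<Rightarrow> real^'nx \<Rightarrow> (nat \<Rightarrow> real^'nu) \<Rightarrow> nat \<Rightarrow> real^'nx" where
  "pred A B x0 u 0 = x0"
| "pred A B x0 u (Suc i) = A *v pred A B x0 u i + B *v u i"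

definition mpc_feasible ::
  "real^'nx^'nx \<Rightarrow> real^'nu^'nx \<Rightarrow> real^'nx^'nu \<Rightarrow> real \<Rightarrow> nat
   \<Rightarrow> (real^'nx) set \<Rightarrow> (real^'nu) set \<Rightarrow> real^'nx
   \<Rightarrow> (nat \<Rightarrow> real^'nu) \<Rightarrow> real^'nx \<Rightarrow> real^'nu \<Rightarrow> bool" where
  "mpc_feasible A B Kb lam N Xc Uc x0 u xb ub \<longleftrightarrow>
     (\<forall>i<N. pred A B x0 u i \<in> Xc \<and> u i \<in> Uc) \<and>
     (pred A B x0 u N, xb, ub) \<in> Xf_lambda lam A B Kb Xc Uc \<and>
     (A - mat 1) *v xb + B *v ub = 0"

definition mpc_cost ::
  "real^'nx^'nx \<Rightarrow> real^'nu^'nx \<Rightarrow> nat \<Rightarrow> real^'nx^'nx \<Rightarrow> real^'nu^'nu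
   \<Rightarrow> real^'nx^'nx \<Rightarrow> real^'nx^'nx \<Rightarrow> real^'nx \<Rightarrow> real^'nx
   \<Rightarrow> (nat \<Rightarrow> real^'nu) \<Rightarrow> real^'nx \<Rightarrow> real^'nu \<Rightarrow> real" where
  "mpc_cost A B N Q R P T xr x0 u xb ub =
     (\<Sum>i<N. wnorm2 Q (pred A B x0 u i - xb) + wnorm2 R (u i - ub))
     + wnorm2 P (pred A B x0 u N - xb) + wnorm2 T (xb - xr)"

definition mpc_optimal ::
  "real^'nx^'nx \<Rightarrow> real^'nu^'nx \<Rightarrow> real^'nx^'nu \<Rightarrow> real \<Rightarrow> nat
   \<Rightarrow> (real^'nx) set \<Rightarrow> (real^'nu) set
   \<Rightarrow> real^'nx^'nx \<Rightarrow> real^'nu^'nu \<Rightarrow> real^'nx^'nx \<Rightarrow> real^'nx^'nx \<Rightarrow> real^'nx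
   \<Rightarrow> real^'nx \<Rightarrow> (nat \<Rightarrow> real^'nu) \<Rightarrow> real^'nx \<Rightarrow> real^'nu \<Rightarrow> bool" where
  "mpc_optimal A B Kb lam N Xc Uc Q R P T xr x0 u xb ub \<longleftrightarrow>
     mpc_feasible A B Kb lam N Xc Uc x0 u xb ub \<and>
     (\<forall>u' xb' ub'. mpc_feasible A B Kb lam N Xc Uc x0 u' xb' ub' \<longrightarrow>
        mpc_cost A B N Q R P T xr x0 u xb ub \<le> mpc_cost A B N Q R P T xr x0 u' xb' ub')"

text \<open>Consistency indicator  Theta_k = prod_{i=q_k+1}^k theta_i  if theta_k = 1, else 0.
  q takes integer values (q_0 = -1).\<close>
definition Theta :: "(nat \<Rightarrow> bool) \<Rightarrow> (nat \<Rightarrow> int) \<Rightarrow> nat \<Rightarrow> nat" where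
  "Theta \<theta> q k = (if \<theta> k then (\<Prod>i\<in>{i. q k + 1 \<le> int i \<and> i \<le> k}. of_bool (\<theta> i)) else 0)"

end

theory Submission
  imports Defs
begin

lemma matpow_Suc: "matpow M (Suc i) = M ** matpow M i"
  by (simp add: matpow_def)

lemma Zset_step:
  assumes z: "z \<in> Zset M W" and v: "v \<in> W"
  shows "M *v z + v \<in> Zset M W"
proof -
  obtain w where w: "\<forall>i. w i \<in> W" "(\<lambda>i. matpow M i *v w i) sums z"
    using z unfolding Zset_def by blast
  define w' where "w' = case_nat v w"
  have "(\<lambda>i. M *v (matpow M i *v w i)) sums (M *v z)"
    using bounded_linear.sums[OF matrix_vector_mul_bounded_linear w(2)] .
  hence "(\<lambda>i. matpow M (Suc i) *v w' (Suc i)) sums (M *v z)"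
    by (simp add: w'_def matpow_Suc matrix_vector_mul_assoc)
  hence "(\<lambda>i. matpow M i *v w' i) sums (M *v z + matpow M 0 *v w' 0)"
    by (subst (asm) sums_Suc_iff)
  hence "(\<lambda>i. matpow M i *v w' i) sums (M *v z + v)"
    by (simp add: w'_def matpow_def)
  moreover have "\<forall>i. w' i \<in> W" using w(1) v by (simp add: w'_def split: nat.split)
  ultimately show ?thesis unfolding Zset_def by blast
qed

lemma Theta_one_iff:
  "Theta \<theta> q k = 1 \<longleftrightarrow> \<theta> k \<and> (\<forall>i. q k + 1 \<le> int i \<and> i \<le> k \<longrightarrow> \<theta> i)"
proof -
  have fin: "finite {i. q k + 1 \<le> int i \<and> i \<le> k}" by simp
  have "(\<Prod>i\<in>{i. q k + 1 \<le> int i \<and> i \<le> k}. (of_bool (\<theta> i)::nat)) =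
        (if \<forall>i\<in>{i. q k + 1 \<le> int i \<and> i \<le> k}. \<theta> i then 1 else 0)"
    using fin by (auto simp: prod_zero_iff intro!: prod.neutral)
  thus ?thesis unfolding Theta_def by auto
qed

theorem proposition1:
  fixes A :: "real^'nx^'nx" and B :: "real^'nu^'nx"
    and K Kb :: "real^'nx^'nu"
    and W X :: "(real^'nx) set" and U :: "(real^'nu) set"
    and Q P T :: "real^'nx^'nx" and R :: "real^'nu^'nu"
    and xr :: "real^'nx" and lam :: real and N :: nat
    and \<theta> \<gamma> :: "nat \<Rightarrow> bool" and q :: "nat \<Rightarrow> int" and s :: "nat \<Rightarrow> nat"
    and ustar :: "nat \<Rightarrow> nat \<Rightarrow> real^'nu" and xbs :: "nat \<Rightarrow> real^'nx" and ubs :: "nat \<Rightarrow> real^'nu"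
    and x xn xp xh w :: "nat \<Rightarrow> real^'nx" and u un uh :: "nat \<Rightarrow> real^'nu"
    and k :: nat
  assumes stab: "stabilizable A B"
    and W: "polyhedron W" "compact W" "0 \<in> interior W"
    and X: "polyhedron X" "bounded X" "0 \<in> interior X"
    and U: "polyhedron U" "bounded U" "0 \<in> interior U"
    and K: "spectral_radius (A - B ** K) < 1"
    and Kb: "spectral_radius (A - B ** Kb) < 1"
    and lam: "0 < lam" "lam < 1"
    and N: "0 < N"
    and QRT: "psd Q" "pd R" "pd T"
    and P: "P = transpose (A - B ** Kb) ** P ** (A - B ** Kb) + Q + transpose Kb ** R ** Kb"
    and dist: "\<forall>j. w j \<in> W"
    and plant: "\<forall>j. x (Suc j) = A *v x j + B *v u j + w j"
    and anc: "\<forall>j. u j = un j - K *v (x j - xn j)"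
    and nominal: "\<forall>j. xn (Suc j) = A *v xn j + B *v un j"
    and actuator: "\<forall>j. un j = (if j - s j < N then ustar (s j) (j - s j)
                                 else ubs (s j) + Kb *v xbs (s j) - Kb *v xn j)"
    and s_def: "\<forall>j. s j = (if Theta \<theta> q j = 1 then j else (if j = 0 then 0 else s (j - 1)))"
    and q0: "q 0 = -1"
    and q_rec: "\<forall>j. q (Suc j) = (if \<gamma> j then int j else q j)"
    and est_x: "\<forall>j. xh j = (if \<gamma> j then xn j else xp j)"
    and est_u: "\<forall>j. uh j = (if \<gamma> j then un j else ustar j 0)"
    and est_pred: "\<forall>j. xp (Suc j) = A *v xh j + B *v uh j"
    and est0: "xp 0 = xn 0"
    and mpc: "\<forall>j. mpc_optimal A B Kb lam N
                   (X \<ominus>\<^sub>P Zset (A - B ** K) W)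
                   (U \<ominus>\<^sub>P ((\<lambda>z. (- K) *v z) ` Zset (A - B ** K) W))
                   Q R P T xr (xp j) (ustar j) (xbs j) (ubs j)"
    and init: "x 0 - xn 0 \<in> Zset (A - B ** K) W"
    and consistent: "Theta \<theta> q k = 1"
  shows "x k \<in> {xp k} \<oplus>\<^sub>M Zset (A - B ** K) W"
proof -
  let ?M = "A - B ** K"
  have err: "x j - xn j \<in> Zset ?M W" for j
  proof (induction j)
    case 0 thus ?case using init by simp
  next
    case (Suc j)
    have "x (Suc j) - xn (Suc j) = ?M *v (x j - xn j) + w j"
      using plant anc nominal
      by (simp add: matrix_vector_mult_diff_rdistrib matrix_vector_mult_diff_distrib
            matrix_vector_mul_assoc[symmetric] algebra_simps)
    thus ?case using Zset_step[OF Suc dist[rule_format]] by simp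
  qed
  have qlt: "q m < int m \<and> -1 \<le> q m \<and> (0 \<le> q m \<longrightarrow> \<gamma> (nat (q m)))" for m
    by (induction m) (auto simp: q0 q_rec)
  have qge: "\<gamma> i \<Longrightarrow> i < m \<Longrightarrow> int i \<le> q m" for i m
  proof (induction m)
    case 0 thus ?case by simp
  next
    case (Suc m) thus ?case using q_rec by (cases "i = m") (auto simp: less_Suc_eq)
  qed
  have gfalse: "q k < int i \<Longrightarrow> i < k \<Longrightarrow> \<not> \<gamma> i" for i
    using qge by force
  have qeq: "q k < int i \<Longrightarrow> i \<le> m \<Longrightarrow> m \<le> k \<Longrightarrow> q m = q i" for i m
  proof (induction m)
    case 0 thus ?case by simp
  next
    case (Suc m)
    show ?case
    proof (cases "i = Suc m")
      case False
      hence "i \<le> m" using Suc by simp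
      hence "\<not> \<gamma> m" using gfalse Suc by force
      thus ?thesis using Suc \<open>i \<le> m\<close> q_rec by simp
    qed simp
  qed
  have th: "\<theta> k" "\<And>i. q k + 1 \<le> int i \<Longrightarrow> i \<le> k \<Longrightarrow> \<theta> i"
    using consistent Theta_one_iff by blast+
  have un_eq: "q k < int i \<Longrightarrow> i \<le> k \<Longrightarrow> un i = ustar i 0" for i
  proof -
    assume a: "q k < int i" "i \<le> k"
    have "q i = q k" using qeq[OF a(1) order_refl a(2)] qeq[of i k] a by simp
    hence "Theta \<theta> q i = 1" unfolding Theta_one_iff using th a by auto
    hence "s i = i" using s_def by simp
    thus ?thesis using actuator N by simp
  qed
  have xeq: "q k + 1 \<le> int i \<Longrightarrow> i \<le> k \<Longrightarrow> xp i = xn i" for i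
  proof (induction i)
    case 0 thus ?case using est0 by simp
  next
    case (Suc i)
    show ?case
    proof (cases "q k + 1 \<le> int i")
      case True
      hence g: "\<not> \<gamma> i" using gfalse Suc by simp
      have "un i = ustar i 0" using un_eq True Suc by simp
      thus ?thesis using Suc True g est_pred est_x est_u nominal by simp
    next
      case False
      hence "q k = int i" using Suc by simp
      hence "\<gamma> i" using qlt[of k] by simp
      thus ?thesis using est_pred est_x est_u nominal by simp
    qed
  qed
  have "xp k = xn k" using xeq[of k] qlt[of k] by simp
  hence "x k = xp k + (x k - xn k)" by simp
  thus ?thesis unfolding minkowski_sum_def using err[of k] by blast
qed

end
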